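(* Let $G$ be a finite group and $C_2$ the cyclic group of order $2$. Suppose that every torsion unit of $V(\mathbb{Z}G)$ is conjugate within $\mathbb{Q}G$ to an element of $G$. Then every torsion unit of $V(\mathbb{Z}[G \times C_2])$ is conjugate within $\mathbb{Q}[G \times C_2]$ to an element of $G \times C_2$.
   Context: For a finite group $H$, $V(\mathbb{Z}H)$ denotes the group of units of augmentation $1$ of the integral group ring $\mathbb{Z}H$, where the augmentation of $\sum_h \alpha_h h$ is $\sum_h \alpha_h$. A torsion unit is a unit of finite order. "Conjugate within $\mathbb{Q}H$" means conjugate by a unit of the rational group algebra $\mathbb{Q}H$. *)

theory Defs
  imports Complex_Main "HOL-Algebra.Group"
begin

text \<open>Group ring R[G] of a finite group G (HOL-Algebra structure) with coefficients in a
  commutative ring R (type class): elements are functions carrier G \<Rightarrow> R, zero outside the carrier.\<close>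

definition gr_elems :: "('a, 'm) monoid_scheme \<Rightarrow> ('a \<Rightarrow> 'r::comm_ring_1) set" where
  "gr_elems G = {f. \<forall>x. x \<notin> carrier G \<longrightarrow> f x = 0}"

definition gr_mult :: "('a, 'm) monoid_scheme \<Rightarrow> ('a \<Rightarrow> 'r::comm_ring_1) \<Rightarrow> ('a \<Rightarrow> 'r) \<Rightarrow> ('a \<Rightarrow> 'r)" where
  "gr_mult G a b = (\<lambda>g. if g \<in> carrier G
       then (\<Sum>h\<in>carrier G. a h * b (inv\<^bsub>G\<^esub> h \<otimes>\<^bsub>G\<^esub> g)) else 0)"

definition gr_of :: "('a, 'm) monoid_scheme \<Rightarrow> 'a \<Rightarrow> ('a \<Rightarrow> 'r::comm_ring_1)" where
  "gr_of G g = (\<lambda>x. if x = g then 1 else 0)"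

definition gr_one :: "('a, 'm) monoid_scheme \<Rightarrow> ('a \<Rightarrow> 'r::comm_ring_1)" where
  "gr_one G = gr_of G \<one>\<^bsub>G\<^esub>"

primrec gr_pow :: "('a, 'm) monoid_scheme \<Rightarrow> ('a \<Rightarrow> 'r::comm_ring_1) \<Rightarrow> nat \<Rightarrow> ('a \<Rightarrow> 'r)" where
  "gr_pow G a 0 = gr_one G"
| "gr_pow G a (Suc n) = gr_mult G (gr_pow G a n) a"

definition gr_aug :: "('a, 'm) monoid_scheme \<Rightarrow> ('a \<Rightarrow> 'r::comm_ring_1) \<Rightarrow> 'r" where
  "gr_aug G a = (\<Sum>g\<in>carrier G. a g)"

definition gr_unit :: "('a, 'm) monoid_scheme \<Rightarrow> ('a \<Rightarrow> 'r::comm_ring_1) \<Rightarrow> bool" where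
  "gr_unit G a \<longleftrightarrow> a \<in> gr_elems G \<and>
     (\<exists>b \<in> gr_elems G. gr_mult G a b = gr_one G \<and> gr_mult G b a = gr_one G)"

definition torsion_unit_V :: "('a, 'm) monoid_scheme \<Rightarrow> ('a \<Rightarrow> int) \<Rightarrow> bool" where
  "torsion_unit_V G u \<longleftrightarrow> gr_unit G u \<and> gr_aug G u = 1 \<and> (\<exists>n>0. gr_pow G u n = gr_one G)"

definition QG_conj_to_group_elem :: "('a, 'm) monoid_scheme \<Rightarrow> ('a \<Rightarrow> int) \<Rightarrow> bool" where
  "QG_conj_to_group_elem G u \<longleftrightarrow>
     (\<exists>w w' :: 'a \<Rightarrow> rat. w \<in> gr_elems G \<and> w' \<in> gr_elems G \<and>
        gr_mult G w w' = gr_one G \<and> gr_mult G w' w = gr_one G \<and>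
        (\<exists>g \<in> carrier G. gr_mult G (gr_mult G w' (\<lambda>x. of_int (u x))) w = gr_of G g))"

definition ZC_property :: "('a, 'm) monoid_scheme \<Rightarrow> bool" where
  "ZC_property G \<longleftrightarrow> (\<forall>u. torsion_unit_V G u \<longrightarrow> QG_conj_to_group_elem G u)"

definition C2 :: "bool monoid" where
  "C2 = \<lparr>carrier = UNIV, mult = (\<lambda>x y. x \<noteq> y), one = False\<rparr>"

end

theory Submission
  imports Defs
begin

locale fgroup = group + assumes fin: "finite (carrier G)"

context fgroup begin

lemma sum_lmult:
  assumes "h \<in> carrier G"
  shows "(\<Sum>g\<in>carrier G. f g) = (\<Sum>k\<in>carrier G. f (h \<otimes> k))"
  by (rule sum.reindex_bij_witness[where i="\<lambda>k. h \<otimes> k" and j="\<lambda>g. inv h \<otimes> g"])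
     (auto simp: assms m_assoc[symmetric])

lemma gr_mult_assoc:
  "gr_mult G (gr_mult G a b) c = gr_mult G a (gr_mult G b c)"
proof (rule ext)
  fix g
  show "gr_mult G (gr_mult G a b) c g = gr_mult G a (gr_mult G b c) g"
  proof (cases "g \<in> carrier G")
    case False thus ?thesis by (simp add: gr_mult_def)
  next
    case True
    have "gr_mult G (gr_mult G a b) c g =
       (\<Sum>h\<in>carrier G. (\<Sum>k\<in>carrier G. a k * b (inv k \<otimes> h)) * c (inv h \<otimes> g))"
      using True by (simp add: gr_mult_def)
    also have "\<dots> = (\<Sum>h\<in>carrier G. \<Sum>k\<in>carrier G. a k * b (inv k \<otimes> h) * c (inv h \<otimes> g))"
      by (simp add: sum_distrib_right)
    also have "\<dots> = (\<Sum>k\<in>carrier G. \<Sum>h\<in>carrier G. a k * b (inv k \<otimes> h) * c (inv h \<otimes> g))"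
      by (rule sum.swap)
    also have "\<dots> = (\<Sum>k\<in>carrier G. a k * (\<Sum>h\<in>carrier G. b (inv k \<otimes> h) * c (inv h \<otimes> g)))"
      by (simp add: sum_distrib_left mult.assoc)
    also have "\<dots> = (\<Sum>k\<in>carrier G. a k * (\<Sum>h\<in>carrier G. b h * c (inv h \<otimes> (inv k \<otimes> g))))"
    proof (rule sum.cong[OF refl])
      fix k assume k: "k \<in> carrier G"
      have "(\<Sum>h\<in>carrier G. b (inv k \<otimes> h) * c (inv h \<otimes> g))
          = (\<Sum>h\<in>carrier G. b (inv k \<otimes> (k \<otimes> h)) * c (inv (k \<otimes> h) \<otimes> g))"
        by (rule sum_lmult[OF k])
      also have "\<dots> = (\<Sum>h\<in>carrier G. b h * c (inv h \<otimes> (inv k \<otimes> g)))"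
        using k True by (intro sum.cong refl) (simp add: m_assoc[symmetric] inv_mult_group)
      finally show "a k * (\<Sum>h\<in>carrier G. b (inv k \<otimes> h) * c (inv h \<otimes> g)) =
          a k * (\<Sum>h\<in>carrier G. b h * c (inv h \<otimes> (inv k \<otimes> g)))" by simp
    qed
    also have "\<dots> = gr_mult G a (gr_mult G b c) g"
      using True by (simp add: gr_mult_def)
    finally show ?thesis .
  qed
qed

lemma gr_mult_elems: "gr_mult G a b \<in> gr_elems G"
  by (simp add: gr_mult_def gr_elems_def)

lemma gr_one_mult: "a \<in> gr_elems G \<Longrightarrow> gr_mult G (gr_one G) a = a"
proof (rule ext)
  fix g assume a: "a \<in> gr_elems G"
  show "gr_mult G (gr_one G) a g = a g"
  proof (cases "g \<in> carrier G")
    case False thus ?thesis using a by (simp add: gr_mult_def gr_elems_def)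
  next
    case True
    have "gr_mult G (gr_one G) a g = (\<Sum>h\<in>carrier G. if h = \<one> then a (inv h \<otimes> g) else 0)"
      using True by (auto simp: gr_mult_def gr_one_def gr_of_def intro!: sum.cong)
    also have "\<dots> = a g" using True fin by simp
    finally show ?thesis .
  qed
qed

lemma gr_mult_one: "a \<in> gr_elems G \<Longrightarrow> gr_mult G a (gr_one G) = a"
proof (rule ext)
  fix g assume a: "a \<in> gr_elems G"
  show "gr_mult G a (gr_one G) g = a g"
  proof (cases "g \<in> carrier G")
    case False thus ?thesis using a by (simp add: gr_mult_def gr_elems_def)
  next
    case True
    have "gr_mult G a (gr_one G) g = (\<Sum>h\<in>carrier G. if h = g then a h else 0)"
      using True by (auto simp: gr_mult_def gr_one_def gr_of_def intro!: sum.cong)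
         (metis inv_equality r_inv inv_closed l_cancel_one)
    also have "\<dots> = a g" using True fin by simp
    finally show ?thesis .
  qed
qed

lemma gr_of_mult:
  assumes g: "g \<in> carrier G" and h: "h \<in> carrier G"
  shows "gr_mult G (gr_of G g) (gr_of G h) = gr_of G (g \<otimes> h)"
proof (rule ext)
  fix x
  show "gr_mult G (gr_of G g) (gr_of G h) x = gr_of G (g \<otimes> h) x"
  proof (cases "x \<in> carrier G")
    case False thus ?thesis using g h by (auto simp: gr_mult_def gr_of_def)
  next
    case True
    have "gr_mult G (gr_of G g) (gr_of G h) x = (\<Sum>k\<in>carrier G. if k = g then gr_of G h (inv k \<otimes> x) else 0)"
      using True by (auto simp: gr_mult_def gr_of_def intro!: sum.cong)
    also have "\<dots> = gr_of G h (inv g \<otimes> x)" using g fin by simp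
    also have "\<dots> = gr_of G (g \<otimes> h) x"
      using g h True by (auto simp: gr_of_def m_assoc[symmetric])
    finally show ?thesis .
  qed
qed

lemma gr_mult_smult_left: "gr_mult G (\<lambda>x. c * a x) b = (\<lambda>x. c * gr_mult G a b x)"
  by (rule ext) (simp add: gr_mult_def sum_distrib_left mult.assoc)

lemma gr_mult_smult_right: "gr_mult G a (\<lambda>x. c * b x) = (\<lambda>x. c * gr_mult G a b x)"
  by (rule ext) (simp add: gr_mult_def sum_distrib_left mult.left_commute)

lemma gr_aug_mult: "gr_aug G (gr_mult G a b) = gr_aug G a * gr_aug G b"
proof -
  have "gr_aug G (gr_mult G a b) = (\<Sum>g\<in>carrier G. \<Sum>h\<in>carrier G. a h * b (inv h \<otimes> g))"
    by (simp add: gr_aug_def gr_mult_def)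
  also have "\<dots> = (\<Sum>h\<in>carrier G. \<Sum>g\<in>carrier G. a h * b (inv h \<otimes> g))"
    by (rule sum.swap)
  also have "\<dots> = (\<Sum>h\<in>carrier G. a h * (\<Sum>g\<in>carrier G. b (inv h \<otimes> g)))"
    by (simp add: sum_distrib_left)
  also have "\<dots> = (\<Sum>h\<in>carrier G. a h * gr_aug G b)"
  proof (rule sum.cong[OF refl])
    fix h assume h: "h \<in> carrier G"
    have "(\<Sum>g\<in>carrier G. b (inv h \<otimes> g)) = (\<Sum>k\<in>carrier G. b (inv h \<otimes> (h \<otimes> k)))"
      by (rule sum_lmult[OF h])
    also have "\<dots> = gr_aug G b" using h
      by (simp add: gr_aug_def m_assoc[symmetric])
    finally show "a h * (\<Sum>g\<in>carrier G. b (inv h \<otimes> g)) = a h * gr_aug G b" by simp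
  qed
  also have "\<dots> = gr_aug G a * gr_aug G b" by (simp add: gr_aug_def sum_distrib_right)
  finally show ?thesis .
qed

definition pa :: "'a set \<Rightarrow> ('a \<Rightarrow> 'r::comm_ring_1) \<Rightarrow> 'r" where
  "pa C x = (\<Sum>g\<in>carrier G. if g \<in> C then x g else 0)"

lemma pa_mult_expand:
  "pa C (gr_mult G a b) = (\<Sum>h\<in>carrier G. \<Sum>k\<in>carrier G. if h \<otimes> k \<in> C then a h * b k else 0)"
proof -
  have "pa C (gr_mult G a b) = (\<Sum>g\<in>carrier G. \<Sum>h\<in>carrier G. if g \<in> C then a h * b (inv h \<otimes> g) else 0)"
    by (auto simp: pa_def gr_mult_def intro!: sum.cong)
  also have "\<dots> = (\<Sum>h\<in>carrier G. \<Sum>g\<in>carrier G. if g \<in> C then a h * b (inv h \<otimes> g) else 0)"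
    by (rule sum.swap)
  also have "\<dots> = (\<Sum>h\<in>carrier G. \<Sum>k\<in>carrier G. if h \<otimes> k \<in> C then a h * b k else 0)"
  proof (rule sum.cong[OF refl])
    fix h assume h: "h \<in> carrier G"
    show "(\<Sum>g\<in>carrier G. if g \<in> C then a h * b (inv h \<otimes> g) else 0) =
          (\<Sum>k\<in>carrier G. if h \<otimes> k \<in> C then a h * b k else 0)"
      by (subst sum_lmult[OF h]) (use h in \<open>auto simp: m_assoc[symmetric] intro!: sum.cong\<close>)
  qed
  finally show ?thesis .
qed

lemma pa_comm:
  assumes C: "\<And>h k. h \<in> carrier G \<Longrightarrow> k \<in> carrier G \<Longrightarrow> h \<otimes> k \<in> C \<Longrightarrow> k \<otimes> h \<in> C"
  shows "pa C (gr_mult G a b) = pa C (gr_mult G b a)"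
proof -
  have "pa C (gr_mult G a b) = (\<Sum>h\<in>carrier G. \<Sum>k\<in>carrier G. if h \<otimes> k \<in> C then a h * b k else 0)"
    by (rule pa_mult_expand)
  also have "\<dots> = (\<Sum>k\<in>carrier G. \<Sum>h\<in>carrier G. if h \<otimes> k \<in> C then a h * b k else 0)"
    by (rule sum.swap)
  also have "\<dots> = (\<Sum>k\<in>carrier G. \<Sum>h\<in>carrier G. if k \<otimes> h \<in> C then b k * a h else 0)"
    by (intro sum.cong refl) (use C in \<open>auto simp: mult.commute\<close>)
  also have "\<dots> = pa C (gr_mult G b a)"
    by (rule pa_mult_expand[symmetric])
  finally show ?thesis .
qed

lemma pa_conj:
  assumes C: "\<And>h k. h \<in> carrier G \<Longrightarrow> k \<in> carrier G \<Longrightarrow> h \<otimes> k \<in> C \<Longrightarrow> k \<otimes> h \<in> C"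
    and x: "x \<in> gr_elems G" and ww: "gr_mult G w w' = gr_one G"
  shows "pa C (gr_mult G (gr_mult G w' x) w) = pa C x"
proof -
  have "pa C (gr_mult G (gr_mult G w' x) w) = pa C (gr_mult G w' (gr_mult G x w))"
    by (simp add: gr_mult_assoc)
  also have "\<dots> = pa C (gr_mult G (gr_mult G x w) w')"
    by (rule pa_comm[OF C])
  also have "\<dots> = pa C x"
    by (simp add: gr_mult_assoc ww gr_mult_one[OF x])
  finally show ?thesis .
qed

lemma pa_of: "g \<in> carrier G \<Longrightarrow> pa C (gr_of G g) = (if g \<in> C then 1 else 0)"
proof -
  assume g: "g \<in> carrier G"
  have "pa C (gr_of G g) = (\<Sum>x\<in>carrier G. if x = g then (if g \<in> C then 1 else 0) else 0)"
    unfolding pa_def gr_of_def by (rule sum.cong) auto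
  also have "\<dots> = (if g \<in> C then 1 else 0)" using fin g by simp
  finally show ?thesis .
qed

lemma gr_pow_neg: "gr_pow G (\<lambda>x. - a x) n = (\<lambda>x. (-1)^n * gr_pow G a n x)"
proof (induction n)
  case 0 show ?case by simp
next
  case (Suc n)
  have "gr_pow G (\<lambda>x. - a x) (Suc n) = gr_mult G (\<lambda>x. (-1)^n * gr_pow G a n x) (\<lambda>x. (-1) * a x)"
    using Suc by simp
  also have "\<dots> = (\<lambda>x. (-1)^(Suc n) * gr_pow G a (Suc n) x)"
    by (simp only: gr_mult_smult_left gr_mult_smult_right) simp
  finally show ?case .
qed

lemma gr_aug_one: "gr_aug G (gr_one G) = 1"
proof -
  have "gr_aug G (gr_one G) = (\<Sum>x\<in>carrier G. if x = \<one> then 1 else 0)"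
    by (simp add: gr_aug_def gr_one_def gr_of_def)
  also have "\<dots> = 1" using fin by simp
  finally show ?thesis .
qed

lemma gr_aug_pow: "gr_aug G (gr_pow G a n) = gr_aug G a ^ n"
  by (induction n) (simp_all add: gr_aug_one gr_aug_mult)

lemma gr_of_elems: "gr_of G g \<in> gr_elems G \<longleftrightarrow> g \<in> carrier G"
  by (auto simp: gr_of_def gr_elems_def)

lemma gr_one_elems: "gr_one G \<in> gr_elems G"
  by (simp add: gr_one_def gr_of_elems)

end

lemma group_C2: "group C2"
  by (rule groupI) (auto simp: C2_def)

lemma inv_C2: "inv\<^bsub>C2\<^esub> e = e"
proof -
  interpret group C2 by (rule group_C2)
  show ?thesis by (rule inv_equality) (auto simp: C2_def)
qed

definition pr1 :: "('a \<times> bool \<Rightarrow> 'r::comm_ring_1) \<Rightarrow> 'a \<Rightarrow> 'r" where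
  "pr1 u = (\<lambda>x. u (x, False) + u (x, True))"
definition pr2 :: "('a \<times> bool \<Rightarrow> 'r::comm_ring_1) \<Rightarrow> 'a \<Rightarrow> 'r" where
  "pr2 u = (\<lambda>x. u (x, False) - u (x, True))"

context fgroup begin

lemma fgroup_prod: "fgroup (G \<times>\<times> C2)"
  unfolding fgroup_def fgroup_axioms_def
  using DirProd_group[OF is_group group_C2] fin by (simp add: C2_def)

lemma C2_carrier: "carrier C2 = UNIV" by (simp add: C2_def)

lemma prod_inv_mult:
  assumes "h \<in> carrier G"
  shows "inv\<^bsub>G \<times>\<times> C2\<^esub> (h, f) \<otimes>\<^bsub>G \<times>\<times> C2\<^esub> (x, e) = (inv h \<otimes> x, f \<noteq> e)"
proof -
  have "inv\<^bsub>G \<times>\<times> C2\<^esub> (h, f) = (inv h, inv\<^bsub>C2\<^esub> f)"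
    by (rule inv_DirProd[OF is_group group_C2 assms]) (simp add: C2_carrier)
  thus ?thesis by (simp add: inv_C2) (simp add: C2_def)
qed

lemma prod_mult_eq:
  assumes x: "x \<in> carrier G"
  shows "gr_mult (G \<times>\<times> C2) u v (x, e) =
    (\<Sum>h\<in>carrier G. u (h, False) * v (inv h \<otimes> x, e) + u (h, True) * v (inv h \<otimes> x, \<not> e))"
proof -
  have "gr_mult (G \<times>\<times> C2) u v (x, e) =
     (\<Sum>p\<in>carrier G \<times> UNIV. u p * v (inv\<^bsub>G \<times>\<times> C2\<^esub> p \<otimes>\<^bsub>G \<times>\<times> C2\<^esub> (x, e)))"
    using x by (simp add: gr_mult_def C2_def)
  also have "\<dots> = (\<Sum>h\<in>carrier G. \<Sum>f\<in>UNIV. u (h, f) * v (inv\<^bsub>G \<times>\<times> C2\<^esub> (h, f) \<otimes>\<^bsub>G \<times>\<times> C2\<^esub> (x, e)))"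
    by (simp add: sum.cartesian_product split_def)
  also have "\<dots> = (\<Sum>h\<in>carrier G. \<Sum>f\<in>UNIV. u (h, f) * v (inv h \<otimes> x, f \<noteq> e))"
    by (intro sum.cong refl) (simp add: prod_inv_mult)
  also have "\<dots> = (\<Sum>h\<in>carrier G. u (h, False) * v (inv h \<otimes> x, e) + u (h, True) * v (inv h \<otimes> x, \<not> e))"
    by (simp add: UNIV_bool add.commute)
  finally show ?thesis .
qed

lemma pr1_mult: "pr1 (gr_mult (G \<times>\<times> C2) u v) = gr_mult G (pr1 u) (pr1 v)"
proof (rule ext)
  fix x show "pr1 (gr_mult (G \<times>\<times> C2) u v) x = gr_mult G (pr1 u) (pr1 v) x"
  proof (cases "x \<in> carrier G")
    case False thus ?thesis by (simp add: pr1_def gr_mult_def)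
  next
    case True
    have "pr1 (gr_mult (G \<times>\<times> C2) u v) x = gr_mult (G \<times>\<times> C2) u v (x, False) + gr_mult (G \<times>\<times> C2) u v (x, True)"
      by (simp add: pr1_def)
    also have "\<dots> = gr_mult G (pr1 u) (pr1 v) x"
      unfolding prod_mult_eq[OF True] using True
      by (simp add: pr1_def gr_mult_def sum.distrib[symmetric] algebra_simps)
    finally show ?thesis .
  qed
qed

lemma pr2_mult: "pr2 (gr_mult (G \<times>\<times> C2) u v) = gr_mult G (pr2 u) (pr2 v)"
proof (rule ext)
  fix x show "pr2 (gr_mult (G \<times>\<times> C2) u v) x = gr_mult G (pr2 u) (pr2 v) x"
  proof (cases "x \<in> carrier G")
    case False thus ?thesis by (simp add: pr2_def gr_mult_def)
  next
    case True
    have "pr2 (gr_mult (G \<times>\<times> C2) u v) x = gr_mult (G \<times>\<times> C2) u v (x, False) - gr_mult (G \<times>\<times> C2) u v (x, True)"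
      by (simp add: pr2_def)
    also have "\<dots> = gr_mult G (pr2 u) (pr2 v) x"
      unfolding prod_mult_eq[OF True] using True
      by (simp add: pr2_def gr_mult_def sum_subtractf[symmetric] algebra_simps)
    finally show ?thesis .
  qed
qed

lemma pr1_of: "pr1 (gr_of (G \<times>\<times> C2) (g, e)) = gr_of G g"
  by (rule ext) (auto simp: pr1_def gr_of_def)

lemma pr2_of: "pr2 (gr_of (G \<times>\<times> C2) (g, e)) = (\<lambda>x. (if e then -1 else 1) * gr_of G g x)"
  by (rule ext) (auto simp: pr2_def gr_of_def)

lemma one_prod: "gr_one (G \<times>\<times> C2) = gr_of (G \<times>\<times> C2) (\<one>, False)"
  by (simp add: gr_one_def C2_def)

lemma pr1_one: "pr1 (gr_one (G \<times>\<times> C2)) = gr_one G"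
  unfolding one_prod pr1_of by (simp add: gr_one_def)

lemma pr2_one: "pr2 (gr_one (G \<times>\<times> C2)) = gr_one G"
  unfolding one_prod pr2_of by (simp add: gr_one_def)

lemma pr1_pow: "pr1 (gr_pow (G \<times>\<times> C2) u n) = gr_pow G (pr1 u) n"
  by (induction n) (simp_all add: pr1_one pr1_mult)

lemma pr2_pow: "pr2 (gr_pow (G \<times>\<times> C2) u n) = gr_pow G (pr2 u) n"
  by (induction n) (simp_all add: pr2_one pr2_mult)

lemma pr1_elems: "u \<in> gr_elems (G \<times>\<times> C2) \<Longrightarrow> pr1 u \<in> gr_elems G"
  by (simp add: gr_elems_def pr1_def C2_def)

lemma pr2_elems: "u \<in> gr_elems (G \<times>\<times> C2) \<Longrightarrow> pr2 u \<in> gr_elems G"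
  by (simp add: gr_elems_def pr2_def C2_def)

lemma aug_prod: "gr_aug (G \<times>\<times> C2) u = gr_aug G (pr1 u)"
proof -
  have "gr_aug (G \<times>\<times> C2) u = (\<Sum>p\<in>carrier G \<times> UNIV. u p)"
    by (simp add: gr_aug_def C2_def)
  also have "\<dots> = (\<Sum>h\<in>carrier G. \<Sum>f\<in>UNIV. u (h, f))"
    by (simp add: sum.cartesian_product split_def)
  also have "\<dots> = gr_aug G (pr1 u)"
    by (simp add: gr_aug_def pr1_def UNIV_bool add.commute)
  finally show ?thesis .
qed

lemma pr1_cast: "pr1 (\<lambda>x. of_int (u x)) = (\<lambda>x. of_int (pr1 u x))"
  by (simp add: pr1_def)

lemma pr2_cast: "pr2 (\<lambda>x. of_int (u x)) = (\<lambda>x. of_int (pr2 u x))"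
  by (simp add: pr2_def)

definition emb :: "('a \<Rightarrow> rat) \<Rightarrow> ('a \<Rightarrow> rat) \<Rightarrow> 'a \<times> bool \<Rightarrow> rat" where
  "emb p q = (\<lambda>(x, e). if e then (p x - q x) / 2 else (p x + q x) / 2)"

lemma pr1_emb: "pr1 (emb p q) = p"
  by (rule ext) (simp add: pr1_def emb_def field_simps)

lemma pr2_emb: "pr2 (emb p q) = q"
  by (rule ext) (simp add: pr2_def emb_def field_simps)

lemma emb_elems: "p \<in> gr_elems G \<Longrightarrow> q \<in> gr_elems G \<Longrightarrow> emb p q \<in> gr_elems (G \<times>\<times> C2)"
  by (auto simp: gr_elems_def emb_def C2_def)

lemma pr_inj:
  fixes u v :: "'a \<times> bool \<Rightarrow> rat"
  assumes "pr1 u = pr1 v" "pr2 u = pr2 v"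
  shows "u = v"
proof (rule ext)
  fix p :: "'a \<times> bool"
  obtain x e where p: "p = (x, e)" by (cases p)
  have "u (x, False) + u (x, True) = v (x, False) + v (x, True)"
       "u (x, False) - u (x, True) = v (x, False) - v (x, True)"
    using assms by (metis pr1_def, metis pr2_def)
  hence "u (x, False) = v (x, False) \<and> u (x, True) = v (x, True)" by linarith
  thus "u p = v p" using p by (cases e) auto
qed

lemma pa_pr:
  "pa C (pr1 u) - pa C (pr2 u) = 2 * pa C (\<lambda>x. u (x, True))"
  by (simp add: pa_def pr1_def pr2_def sum_subtractf[symmetric] sum_distrib_left
      if_distrib algebra_simps cong: if_cong)

lemma pa_cast: "pa C (\<lambda>x. of_int (f x)) = of_int (pa C f)"
  by (simp add: pa_def of_int_sum if_distrib cong: if_cong)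

lemma pa_smult: "pa C (\<lambda>x. c * f x) = c * pa C f"
  by (simp add: pa_def sum_distrib_left if_distrib cong: if_cong)

lemma gr_pow_smult: "gr_pow G (\<lambda>x. c * a x) n = (\<lambda>x. c^n * gr_pow G a n x)"
proof (induction n)
  case 0 show ?case by simp
next
  case (Suc n)
  have "gr_pow G (\<lambda>x. c * a x) (Suc n) = gr_mult G (\<lambda>x. c^n * gr_pow G a n x) (\<lambda>x. c * a x)"
    using Suc by simp
  also have "\<dots> = (\<lambda>x. c^(Suc n) * gr_pow G a (Suc n) x)"
    by (simp only: gr_mult_smult_left gr_mult_smult_right) (simp add: mult_ac)
  finally show ?case .
qed

lemma conj_class_aux: 
  assumes that: "h \<in> carrier G" "k \<in> carrier G" and m: "m \<in> carrier G" "h \<otimes> k = m \<otimes> g1 \<otimes> inv m" and g1: "g1 \<in> carrier G"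
  shows "k \<otimes> h \<in> {y \<in> carrier G. \<exists>k\<in>carrier G. y = k \<otimes> g1 \<otimes> inv k}"
proof -
    have e1: "k \<otimes> h = inv h \<otimes> (h \<otimes> k) \<otimes> h"
      using that by (simp add: m_assoc[symmetric])
    have e2: "inv (inv h \<otimes> m) = inv m \<otimes> h"
      using that m by (simp add: inv_mult_group)
    have "k \<otimes> h = inv h \<otimes> (m \<otimes> g1 \<otimes> inv m) \<otimes> h" using e1 m(2) by simp
    also have "\<dots> = (inv h \<otimes> m) \<otimes> g1 \<otimes> (inv m \<otimes> h)"
      using that m g1 by (simp add: m_assoc)
    finally have "k \<otimes> h = (inv h \<otimes> m) \<otimes> g1 \<otimes> inv (inv h \<otimes> m)"
      unfolding e2 .
    thus ?thesis using that m g1 by (intro CollectI conjI bexI[of _ "inv h \<otimes> m"]) simp_all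
qed

lemma int_pow_eq_1:
  fixes s :: int assumes "s ^ n = 1" "n > 0" shows "s = 1 \<or> s = -1"
proof -
  obtain m where m: "n = Suc m" using assms(2) by (cases n) auto
  have "1 = s * s ^ m" using assms(1) unfolding m by simp
  hence "s dvd 1" by (rule dvdI)
  hence "\<bar>s\<bar> = 1" by simp
  thus ?thesis by linarith
qed

lemma main:
  assumes ZC: "ZC_property G"
  shows "ZC_property (G \<times>\<times> C2)"
  unfolding ZC_property_def
proof (intro allI impI)
  fix u :: "'a \<times> bool \<Rightarrow> int"
  let ?H = "G \<times>\<times> C2"
  assume tu: "torsion_unit_V ?H u"
  then obtain v n where uE: "u \<in> gr_elems ?H" and vE: "v \<in> gr_elems ?H"
    and uv: "gr_mult ?H u v = gr_one ?H" and vu: "gr_mult ?H v u = gr_one ?H"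
    and aug: "gr_aug ?H u = 1" and n: "n > 0" and un: "gr_pow ?H u n = gr_one ?H"
    unfolding torsion_unit_V_def gr_unit_def by blast
  define u1 where "u1 = pr1 u"
  define u2 where "u2 = pr2 u"
  define s where "s = gr_aug G u2"
  have u1E: "u1 \<in> gr_elems G" and u2E: "u2 \<in> gr_elems G"
    using uE by (simp_all add: u1_def u2_def pr1_elems pr2_elems)
  have v1E: "pr1 v \<in> gr_elems G" and v2E: "pr2 v \<in> gr_elems G"
    using vE by (simp_all add: pr1_elems pr2_elems)
  have u1v: "gr_mult G u1 (pr1 v) = gr_one G" "gr_mult G (pr1 v) u1 = gr_one G"
    using arg_cong[OF uv, of pr1] arg_cong[OF vu, of pr1]
    by (simp_all add: u1_def pr1_mult pr1_one)
  have u2v: "gr_mult G u2 (pr2 v) = gr_one G" "gr_mult G (pr2 v) u2 = gr_one G"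
    using arg_cong[OF uv, of pr2] arg_cong[OF vu, of pr2]
    by (simp_all add: u2_def pr2_mult pr2_one)
  have u1n: "gr_pow G u1 n = gr_one G"
    using arg_cong[OF un, of pr1] by (simp add: u1_def pr1_pow pr1_one)
  have u2n: "gr_pow G u2 n = gr_one G"
    using arg_cong[OF un, of pr2] by (simp add: u2_def pr2_pow pr2_one)
  have aug1: "gr_aug G u1 = 1" using aug by (simp add: u1_def aug_prod)
  have sn: "s ^ n = 1"
    using arg_cong[OF u2n, of "gr_aug G"] by (simp add: s_def gr_aug_pow gr_aug_one)
  have s1: "s = 1 \<or> s = -1" by (rule int_pow_eq_1[OF sn n])
  hence ss: "s * s = 1" by auto
  define u2' where "u2' = (\<lambda>x. s * u2 x)"
  have tu1: "torsion_unit_V G u1"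
    unfolding torsion_unit_V_def gr_unit_def using u1E v1E u1v aug1 u1n n by blast
  have tu2: "torsion_unit_V G u2'"
    unfolding torsion_unit_V_def gr_unit_def
  proof (intro conjI)
    show "u2' \<in> gr_elems G" using u2E by (simp add: u2'_def gr_elems_def)
    show "\<exists>b\<in>gr_elems G. gr_mult G u2' b = gr_one G \<and> gr_mult G b u2' = gr_one G"
    proof (intro bexI conjI)
      show "(\<lambda>x. s * pr2 v x) \<in> gr_elems G" using v2E by (simp add: gr_elems_def)
      show "gr_mult G u2' (\<lambda>x. s * pr2 v x) = gr_one G"
        unfolding u2'_def gr_mult_smult_left gr_mult_smult_right u2v
        by (simp add: mult.assoc[symmetric] ss)
      show "gr_mult G (\<lambda>x. s * pr2 v x) u2' = gr_one G"
        unfolding u2'_def gr_mult_smult_left gr_mult_smult_right u2v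
        by (simp add: mult.assoc[symmetric] ss)
    qed
    have "gr_aug G u2' = s * gr_aug G u2" by (simp add: u2'_def gr_aug_def sum_distrib_left)
    thus "gr_aug G u2' = 1" using ss by (simp add: s_def)
    show "\<exists>n>0. gr_pow G u2' n = gr_one G"
      using n by (intro exI[of _ n]) (simp add: u2'_def gr_pow_smult u2n sn)
  qed
  have "QG_conj_to_group_elem G u1" using ZC tu1 by (simp add: ZC_property_def)
  then obtain w1 w1' :: "'a \<Rightarrow> rat" and g1 where w1E: "w1 \<in> gr_elems G" "w1' \<in> gr_elems G"
    and w1i: "gr_mult G w1 w1' = gr_one G" "gr_mult G w1' w1 = gr_one G"
    and g1: "g1 \<in> carrier G" and c1: "gr_mult G (gr_mult G w1' (\<lambda>x. of_int (u1 x))) w1 = gr_of G g1"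
    unfolding QG_conj_to_group_elem_def by (elim exE conjE bexE) (rule that, assumption+)
  have "QG_conj_to_group_elem G u2'" using ZC tu2 by (simp add: ZC_property_def)
  then obtain w2 w2' :: "'a \<Rightarrow> rat" and g2 where w2E: "w2 \<in> gr_elems G" "w2' \<in> gr_elems G"
    and w2i: "gr_mult G w2 w2' = gr_one G" "gr_mult G w2' w2 = gr_one G"
    and g2: "g2 \<in> carrier G" and c2: "gr_mult G (gr_mult G w2' (\<lambda>x. of_int (u2' x))) w2 = gr_of G g2"
    unfolding QG_conj_to_group_elem_def by (elim exE conjE bexE) (rule that, assumption+)
  define C where "C = {y \<in> carrier G. \<exists>k\<in>carrier G. y = k \<otimes> g1 \<otimes> inv k}"
  have Cc: "k \<otimes> h \<in> C" if "h \<in> carrier G" "k \<in> carrier G" "h \<otimes> k \<in> C" for h k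
  proof -
    have "\<exists>m\<in>carrier G. h \<otimes> k = m \<otimes> g1 \<otimes> inv m" using that(3) by (simp add: C_def)
    then obtain m where m: "m \<in> carrier G" "h \<otimes> k = m \<otimes> g1 \<otimes> inv m" by blast
    show ?thesis unfolding C_def by (rule conj_class_aux[OF that(1,2) m g1])
  qed
  have g1C: "g1 \<in> C" unfolding C_def using g1 by (intro CollectI conjI bexI[of _ \<one>]) simp_all
  have u1QE: "(\<lambda>x. of_int (u1 x) :: rat) \<in> gr_elems G" using u1E by (simp add: gr_elems_def)
  have "pa C (\<lambda>x. of_int (u1 x) :: rat) = pa C (gr_mult G (gr_mult G w1' (\<lambda>x. of_int (u1 x))) w1)"
    by (rule pa_conj[OF Cc u1QE w1i(1), symmetric])
  also have "\<dots> = pa C (gr_of G g1 :: 'a \<Rightarrow> rat)" by (simp only: c1)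
  finally have "pa C (\<lambda>x. of_int (u1 x) :: rat) = pa C (gr_of G g1 :: 'a \<Rightarrow> rat)" .
  hence pa1: "pa C u1 = 1" using g1 g1C by (simp add: pa_cast pa_of)
  have u2QE: "(\<lambda>x. of_int (u2' x) :: rat) \<in> gr_elems G" using u2E by (simp add: gr_elems_def u2'_def)
  have "pa C (\<lambda>x. of_int (u2' x) :: rat) = pa C (gr_mult G (gr_mult G w2' (\<lambda>x. of_int (u2' x))) w2)"
    by (rule pa_conj[OF Cc u2QE w2i(1), symmetric])
  also have "\<dots> = pa C (gr_of G g2 :: 'a \<Rightarrow> rat)" by (simp only: c2)
  finally have "pa C (\<lambda>x. of_int (u2' x) :: rat) = pa C (gr_of G g2 :: 'a \<Rightarrow> rat)" .
  hence "(of_int (pa C u2') :: rat) = (if g2 \<in> C then 1 else 0)" using g2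
    by (simp add: pa_cast pa_of)
  hence "pa C u2' = (if g2 \<in> C then 1 else 0)" by (cases "g2 \<in> C") simp_all
  hence pa2: "s * pa C u2 = (if g2 \<in> C then 1 else 0)" by (simp add: u2'_def pa_smult)
  have "pa C u1 - pa C u2 = 2 * pa C (\<lambda>x. u (x, True))"
    unfolding u1_def u2_def by (rule pa_pr)
  have g2C: "g2 \<in> C"
  proof (rule ccontr)
    assume "g2 \<notin> C"
    hence "pa C u2 = 0" using pa2 ss by (metis mult_eq_0_iff one_neq_zero)
    hence "1 = 2 * pa C (\<lambda>x. u (x, True))" using pa1 \<open>pa C u1 - pa C u2 = _\<close> by simp
    thus False by presburger
  qed
  then obtain k where k: "k \<in> carrier G" "g2 = k \<otimes> g1 \<otimes> inv k" unfolding C_def by blast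
  define e where "e = (s = -1)"
  have se: "(of_int s :: rat) = (if e then -1 else 1)" using s1 by (auto simp: e_def)
  define K where "K = (gr_of G k :: 'a \<Rightarrow> rat)"
  define K' where "K' = (gr_of G (inv k) :: 'a \<Rightarrow> rat)"
  have KE: "K \<in> gr_elems G" "K' \<in> gr_elems G" using k by (simp_all add: K_def K'_def gr_of_elems)
  have KK: "gr_mult G K K' = gr_one G" "gr_mult G K' K = gr_one G"
    using k by (simp_all add: K_def K'_def gr_of_mult gr_one_def)
  define w2n where "w2n = gr_mult G w2 K"
  define w2n' where "w2n' = gr_mult G K' w2'"
  have i1: "gr_mult G w2n w2n' = gr_one G"
  proof -
    have "gr_mult G w2n w2n' = gr_mult G w2 (gr_mult G (gr_mult G K K') w2')"
      unfolding w2n_def w2n'_def by (simp only: gr_mult_assoc)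
    also have "\<dots> = gr_one G" using w2E w2i by (simp add: KK gr_one_mult)
    finally show ?thesis .
  qed
  have i2: "gr_mult G w2n' w2n = gr_one G"
  proof -
    have "gr_mult G w2n' w2n = gr_mult G K' (gr_mult G (gr_mult G w2' w2) K)"
      unfolding w2n_def w2n'_def by (simp only: gr_mult_assoc)
    also have "\<dots> = gr_one G" using KE w2i by (simp add: KK gr_one_mult)
    finally show ?thesis .
  qed
  define X2 where "X2 = (\<lambda>x. of_int (u2' x) :: rat)"
  have c2n: "gr_mult G (gr_mult G w2n' X2) w2n = gr_of G g1"
  proof -
    have "gr_mult G (gr_mult G w2n' X2) w2n = gr_mult G K' (gr_mult G (gr_mult G (gr_mult G w2' X2) w2) K)"
      unfolding w2n_def w2n'_def by (simp only: gr_mult_assoc)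
    also have "\<dots> = gr_mult G K' (gr_mult G (gr_of G g2) K)" using c2 by (simp add: X2_def)
    also have "\<dots> = gr_of G (inv k \<otimes> (g2 \<otimes> k))"
      using k g2 by (simp add: K_def K'_def gr_of_mult)
    also have "inv k \<otimes> (g2 \<otimes> k) = g1"
    proof -
      have h: "inv k \<otimes> (k \<otimes> g1) = g1" using k g1 by (simp add: m_assoc[symmetric])
      have "inv k \<otimes> (g2 \<otimes> k) = (inv k \<otimes> k) \<otimes> g1 \<otimes> (inv k \<otimes> k)"
        using k g1 by (simp add: m_assoc h)
      thus ?thesis using k g1 by simp
    qed
    finally show ?thesis .
  qed
  have u2X: "(\<lambda>x. of_int (u2 x) :: rat) = (\<lambda>x. of_int s * X2 x)"
  proof (rule ext)
    fix x
    have "u2 x = s * u2' x" using ss by (simp add: u2'_def mult.assoc[symmetric])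
    thus "(of_int (u2 x) :: rat) = of_int s * X2 x" by (simp add: X2_def)
  qed
  define W where "W = emb w1 w2n"
  define W' where "W' = emb w1' w2n'"
  show "QG_conj_to_group_elem ?H u"
    unfolding QG_conj_to_group_elem_def
  proof (rule exI[of _ W], rule exI[of _ W'], intro conjI bexI[of _ "(g1, e)"])
    show "W \<in> gr_elems ?H" unfolding W_def w2n_def using w1E by (intro emb_elems gr_mult_elems)
    show "W' \<in> gr_elems ?H" unfolding W'_def w2n'_def using w1E by (intro emb_elems gr_mult_elems)
    show "gr_mult ?H W W' = gr_one ?H"
      by (rule pr_inj) (simp_all add: W_def W'_def pr1_mult pr2_mult pr1_emb pr2_emb pr1_one pr2_one w1i i1)
    show "gr_mult ?H W' W = gr_one ?H"
      by (rule pr_inj) (simp_all add: W_def W'_def pr1_mult pr2_mult pr1_emb pr2_emb pr1_one pr2_one w1i i2)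
    show "(g1, e) \<in> carrier ?H" using g1 by (simp add: C2_def)
    show "gr_mult ?H (gr_mult ?H W' (\<lambda>x. of_int (u x))) W = gr_of ?H (g1, e)"
    proof (rule pr_inj)
      show "pr1 (gr_mult ?H (gr_mult ?H W' (\<lambda>x. of_int (u x))) W) = pr1 (gr_of ?H (g1, e))"
        using c1 by (simp add: W_def W'_def pr1_mult pr1_emb pr1_cast pr1_of u1_def)
      have "pr2 (gr_mult ?H (gr_mult ?H W' (\<lambda>x. of_int (u x))) W)
          = gr_mult G (gr_mult G w2n' (\<lambda>x. of_int (u2 x))) w2n"
        by (simp add: W_def W'_def pr2_mult pr2_emb pr2_cast u2_def)
      also have "\<dots> = (\<lambda>x. of_int s * gr_mult G (gr_mult G w2n' X2) w2n x)"
        unfolding u2X by (simp only: gr_mult_smult_left gr_mult_smult_right)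
      also have "\<dots> = pr2 (gr_of ?H (g1, e))"
        unfolding c2n pr2_of se ..
      finally show "pr2 (gr_mult ?H (gr_mult ?H W' (\<lambda>x. of_int (u x))) W) = pr2 (gr_of ?H (g1, e))" .
    qed
  qed
qed

end

theorem proposition2:
  fixes G :: "('a, 'm) monoid_scheme"
  assumes "group G" and "finite (carrier G)"
    and "ZC_property G"
  shows "ZC_property (G \<times>\<times> C2)"
proof -
  interpret fgroup G using assms(1,2) by (simp add: fgroup_def fgroup_axioms_def)
  show ?thesis by (rule main[OF assms(3)])
qed

end
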